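(* Let $M^\alpha,M^\beta$ be manifolds equipped with flows $\phi^\alpha,\phi^\beta$, let $N^\alpha,N^\beta$ be isolating neighborhoods, and let $h^{\beta\alpha}:M^\alpha\to M^\beta$ be an isolated map. Then there exists an open neighborhood $A$ of $(\phi^\alpha,h^{\beta\alpha},\phi^\beta)$ in $\mathscr{C}=\{(\tilde\phi^\alpha,\tilde h^{\beta\alpha},\tilde\phi^\beta)\in C^\infty(\mathbb{R}\times M^\alpha,M^\alpha)\times C^\infty(M^\alpha,M^\beta)\times C^\infty(\mathbb{R}\times M^\beta,M^\beta):N^\alpha,N^\beta\text{ are isolating neighborhoods of the flows }\tilde\phi^\alpha,\tilde\phi^\beta\}$, equipped with the compact-open topology, such that for every $(\tilde\phi^\alpha,\tilde h^{\beta\alpha},\tilde\phi^\beta)\in A$ the map $\tilde h^{\beta\alpha}$ is isolated with respect to $N^\alpha,N^\beta$ and the flows $\tilde\phi^\alpha,\tilde\phi^\beta$.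
   Context: A compact neighborhood $N$ is an isolating neighborhood for a flow $\phi$ if $\operatorname{Inv}(N,\phi)=\{x\in N:\phi(t,x)\in N\ \forall t\in\mathbb{R}\}\subset\operatorname{Int}N$. For a point $p$, $\mathcal{O}_+(p)=\{\phi(t,p):t\ge0\}$ and $\mathcal{O}_-(p)=\{\phi(t,p):t\le0\}$. A map $h:M^\alpha\to M^\beta$ is isolated (with respect to $N^\alpha,N^\beta$ and flows $\phi^\alpha,\phi^\beta$) if every $p$ in $S_h=\{p\in N^\alpha:\mathcal{O}_-(p)\subset N^\alpha,\ \mathcal{O}_+(h(p))\subset N^\beta\}$ satisfies $\mathcal{O}_-(p)\subset\operatorname{Int}N^\alpha$ and $\mathcal{O}_+(h(p))\subset\operatorname{Int}N^\beta$ (orbits taken with respect to $\phi^\alpha$, resp. $\phi^\beta$). *)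

theory Defs
  imports "HOL-Analysis.Analysis"
begin

definition is_flow :: "(real \<times> 'a::topological_space \<Rightarrow> 'a) \<Rightarrow> bool" where
  "is_flow \<phi> \<longleftrightarrow> continuous_on UNIV \<phi> \<and> (\<forall>x. \<phi> (0, x) = x) \<and>
     (\<forall>s t x. \<phi> (s + t, x) = \<phi> (s, \<phi> (t, x)))"

definition Inv :: "'a set \<Rightarrow> (real \<times> 'a \<Rightarrow> 'a) \<Rightarrow> 'a set" where
  "Inv N \<phi> = {x \<in> N. \<forall>t. \<phi> (t, x) \<in> N}"

definition isolating_nbhd :: "'a::topological_space set \<Rightarrow> (real \<times> 'a \<Rightarrow> 'a) \<Rightarrow> bool" where
  "isolating_nbhd N \<phi> \<longleftrightarrow> compact N \<and> Inv N \<phi> \<subseteq> interior N"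

definition fwd_orbit :: "(real \<times> 'a \<Rightarrow> 'a) \<Rightarrow> 'a \<Rightarrow> 'a set" where
  "fwd_orbit \<phi> p = {\<phi> (t, p) | t. t \<ge> 0}"

definition bwd_orbit :: "(real \<times> 'a \<Rightarrow> 'a) \<Rightarrow> 'a \<Rightarrow> 'a set" where
  "bwd_orbit \<phi> p = {\<phi> (t, p) | t. t \<le> 0}"

definition S_set :: "(real \<times> 'a \<Rightarrow> 'a) \<Rightarrow> ('a \<Rightarrow> 'b) \<Rightarrow> (real \<times> 'b \<Rightarrow> 'b)
    \<Rightarrow> 'a set \<Rightarrow> 'b set \<Rightarrow> 'a set" where
  "S_set \<phi>a h \<phi>b Na Nb = {p \<in> Na. bwd_orbit \<phi>a p \<subseteq> Na \<and> fwd_orbit \<phi>b (h p) \<subseteq> Nb}"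

definition isolated_map :: "(real \<times> 'a::topological_space \<Rightarrow> 'a) \<Rightarrow> ('a \<Rightarrow> 'b)
    \<Rightarrow> (real \<times> 'b::topological_space \<Rightarrow> 'b) \<Rightarrow> 'a set \<Rightarrow> 'b set \<Rightarrow> bool" where
  "isolated_map \<phi>a h \<phi>b Na Nb \<longleftrightarrow>
     (\<forall>p \<in> S_set \<phi>a h \<phi>b Na Nb.
        bwd_orbit \<phi>a p \<subseteq> interior Na \<and> fwd_orbit \<phi>b (h p) \<subseteq> interior Nb)"

definition compact_open :: "('a::topological_space \<Rightarrow> 'b::topological_space) topology" where
  "compact_open = subtopology
     (topology_generated_by {{f. f ` K \<subseteq> U} | K U. compact K \<and> open U})
     {f. continuous_on UNIV f}"

definition C_space :: "'a::topological_space set \<Rightarrow> 'b::topological_space set \<Rightarrow>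
    ((real \<times> 'a \<Rightarrow> 'a) \<times> ('a \<Rightarrow> 'b) \<times> (real \<times> 'b \<Rightarrow> 'b)) set" where
  "C_space Na Nb = {(\<phi>a, h, \<phi>b). is_flow \<phi>a \<and> continuous_on UNIV h \<and> is_flow \<phi>b \<and>
      isolating_nbhd Na \<phi>a \<and> isolating_nbhd Nb \<phi>b}"

definition C_topology :: "'a::topological_space set \<Rightarrow> 'b::topological_space set \<Rightarrow>
    ((real \<times> 'a \<Rightarrow> 'a) \<times> ('a \<Rightarrow> 'b) \<times> (real \<times> 'b \<Rightarrow> 'b)) topology" where
  "C_topology Na Nb = subtopology (prod_topology compact_open (prod_topology compact_open compact_open))
      (C_space Na Nb)"

end

theory Submission
  imports Defs
begin

lemma co_topspace: "topspace (compact_open :: ('a::topological_space \<Rightarrow> 'b::topological_space) topology)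
   = {f. continuous_on UNIV f}"
proof -
  have "(UNIV :: ('a\<Rightarrow>'b) set) \<in> {{f. f ` K \<subseteq> U} | K U. compact K \<and> open U}"
    by (rule CollectI, rule exI[of _ "{}"], rule exI[of _ UNIV]) auto
  then have u: "\<Union> {{f::'a\<Rightarrow>'b. f ` K \<subseteq> U} | K U. compact K \<and> open U} = UNIV" by blast
  show ?thesis unfolding compact_open_def topspace_subtopology topology_generated_by_topspace u by simp
qed

lemma co_open:
  assumes "compact K" "open U"
  shows "openin compact_open ({f. f ` K \<subseteq> U} \<inter> {f. continuous_on UNIV f})"
  unfolding compact_open_def openin_subtopology
  apply (rule exI[of _ "{f. f ` K \<subseteq> U}"])
  using assms by (auto simp: openin_topology_generated_by_iff intro!: generate_topology_on.Basis)

lemma Hausdorff_t2: "Hausdorff_space (euclidean :: 'a::t2_space topology)"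
  unfolding Hausdorff_space_def disjnt_def
  by (metis hausdorff open_openin)

lemma lc_nbhd:
  fixes p :: "'a::t2_space"
  assumes "locally_compact_space (euclidean :: 'a topology)" "open Ob" "p \<in> Ob"
  shows "\<exists>V K. open V \<and> compact K \<and> p \<in> V \<and> V \<subseteq> K \<and> K \<subseteq> Ob"
proof -
  have "neighbourhood_base_of (compactin euclidean) (euclidean :: 'a topology)"
  proof -
    have H: "Hausdorff_space (euclidean :: 'a topology)" by (rule Hausdorff_t2)
    show ?thesis
      using locally_compact_space_neighbourhood_base[of "euclidean :: 'a topology"] assms(1) H by blast
  qed
  moreover have "openin euclidean Ob" using assms(2) by (metis open_openin)
  ultimately obtain U V where "openin euclidean U" "compactin euclidean V" "p \<in> U" "U \<subseteq> V" "V \<subseteq> Ob"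
    using assms(3) unfolding neighbourhood_base_of by meson
  then show ?thesis unfolding open_openin[symmetric] compactin_euclidean_iff by blast
qed

lemma lemma_L:
  fixes \<phi> :: "real \<times> 'a::t2_space \<Rightarrow> 'c::topological_space"
  assumes lc: "locally_compact_space (euclidean :: 'a topology)"
    and cont: "continuous_on UNIV \<phi>" and I: "compact I" and U: "open U"
    and sub: "\<phi> ` (I \<times> {p}) \<subseteq> U"
  shows "\<exists>Ob W. open Ob \<and> p \<in> Ob \<and> openin compact_open W \<and> \<phi> \<in> W \<and> (\<forall>\<psi>\<in>W. \<psi> ` (I \<times> Ob) \<subseteq> U)"
proof -
  have op: "open (\<phi> -` U)" using cont U continuous_on_open_vimage[of UNIV \<phi>] by auto
  have oo: "openin (prod_topology euclidean euclidean) (\<phi> -` U)"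
    using op by (simp add: prod_topology_euclidean)
  have ss: "I \<times> {p} \<subseteq> \<phi> -` U" using sub by auto
  have "\<exists>A B. openin euclidean A \<and> openin euclidean B \<and> I \<subseteq> A \<and> p \<in> B \<and> A \<times> B \<subseteq> \<phi> -` U"
    by (rule tube_lemma_left[OF oo _ _ ss]) (use I in \<open>auto simp: compactin_euclidean_iff\<close>)
  then obtain A B where AB: "openin euclidean A" "openin euclidean B" "I \<subseteq> A" "p \<in> B" "A \<times> B \<subseteq> \<phi> -` U"
    by blast
  obtain V K where VK: "open V" "compact K" "p \<in> V" "V \<subseteq> K" "K \<subseteq> B"
    using lc_nbhd[OF lc _ AB(4)] AB(2) by (metis open_openin)
  define W where "W = {f. f ` (I \<times> K) \<subseteq> U} \<inter> {f. continuous_on UNIV f}"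
  have "openin compact_open W" unfolding W_def by (rule co_open) (use I VK U compact_Times in auto)
  moreover have "I \<times> K \<subseteq> A \<times> B" using AB VK by auto
  then have "\<phi> \<in> W" unfolding W_def using cont AB(5) by auto
  moreover have "I \<times> V \<subseteq> I \<times> K" using VK by auto
  then have "\<forall>\<psi>\<in>W. \<psi> ` (I \<times> V) \<subseteq> U" unfolding W_def by blast
  ultimately show ?thesis using VK by blast
qed

lemma lemma_G:
  fixes h :: "'a::t2_space \<Rightarrow> 'b::topological_space"
  assumes lc: "locally_compact_space (euclidean :: 'a topology)"
    and cont: "continuous_on UNIV h" and V: "open V" and hp: "h p \<in> V"
  shows "\<exists>Ob W. open Ob \<and> p \<in> Ob \<and> openin compact_open W \<and> h \<in> W \<and> (\<forall>g\<in>W. g ` Ob \<subseteq> V)"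
proof -
  have op: "open (h -` V)" using cont V continuous_on_open_vimage[of UNIV h] by auto
  obtain Ob K where VK: "open Ob" "compact K" "p \<in> Ob" "Ob \<subseteq> K" "K \<subseteq> h -` V"
    using lc_nbhd[OF lc op, of p] hp by auto
  define W where "W = {f. f ` K \<subseteq> V} \<inter> {f. continuous_on UNIV f}"
  have "openin compact_open W" unfolding W_def by (rule co_open) (use VK V in auto)
  moreover have "h \<in> W" unfolding W_def using cont VK by auto
  moreover have "\<forall>g\<in>W. g ` Ob \<subseteq> V" unfolding W_def using VK by auto
  ultimately show ?thesis using VK by blast
qed

lemma cover_lemma:
  fixes S :: "'a::topological_space set" and P :: "real \<Rightarrow> 'w \<Rightarrow> 'a \<Rightarrow> bool"
  assumes S: "compact S" and a: "a \<in> topspace X"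
    and loc: "\<And>x. x \<in> S \<Longrightarrow> \<exists>Ob W r. open Ob \<and> x \<in> Ob \<and> openin X W \<and> a \<in> W \<and> (\<forall>w\<in>W. \<forall>y\<in>Ob. P r w y)"
    and mono: "\<And>r r' w y. r \<le> r' \<Longrightarrow> P r w y \<Longrightarrow> P r' w y"
  shows "\<exists>W R. openin X W \<and> a \<in> W \<and> (\<forall>w\<in>W. \<forall>y\<in>S. P R w y)"
proof -
  have "\<forall>x\<in>S. \<exists>z. open (fst z) \<and> x \<in> fst z \<and> openin X (fst (snd z)) \<and> a \<in> fst (snd z) \<and>
      (\<forall>w\<in>fst (snd z). \<forall>y\<in>fst z. P (snd (snd z)) w y)"
  proof
    fix x assume "x \<in> S"
    from loc[OF this] obtain Ob W r where H: "open Ob \<and> x \<in> Ob \<and> openin X W \<and> a \<in> W \<and> (\<forall>w\<in>W. \<forall>y\<in>Ob. P r w y)"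
      by (elim exE)
    show "\<exists>z. open (fst z) \<and> x \<in> fst z \<and> openin X (fst (snd z)) \<and> a \<in> fst (snd z) \<and>
      (\<forall>w\<in>fst (snd z). \<forall>y\<in>fst z. P (snd (snd z)) w y)"
      using H by (intro exI[of _ "(Ob, W, r)"]) auto
  qed
  then obtain f where f: "\<forall>x\<in>S. open (fst (f x)) \<and> x \<in> fst (f x) \<and> openin X (fst (snd (f x))) \<and> a \<in> fst (snd (f x)) \<and>
      (\<forall>w\<in>fst (snd (f x)). \<forall>y\<in>fst (f x). P (snd (snd (f x))) w y)"
    by (rule bchoice[elim_format]) blast
  define Ofn where "Ofn x = fst (f x)" for x
  define WW where "WW x = fst (snd (f x))" for x
  define rr where "rr x = snd (snd (f x))" for x
  have H: "\<And>x. x \<in> S \<Longrightarrow> open (Ofn x) \<and> x \<in> Ofn x \<and> openin X (WW x) \<and> a \<in> WW x \<and> (\<forall>w\<in>WW x. \<forall>y\<in>Ofn x. P (rr x) w y)"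
    using f unfolding Ofn_def WW_def rr_def by blast
  have "S \<subseteq> (\<Union>x\<in>S. Ofn x)" using H by blast
  then obtain D where D: "D \<subseteq> S" "finite D" "S \<subseteq> (\<Union>x\<in>D. Ofn x)"
    using compactE_image[OF S, of S Ofn] H by blast
  define W where "W = (\<Inter>x\<in>D. WW x) \<inter> topspace X"
  define R where "R = Max (insert 0 (rr ` D))"
  have "openin X W" unfolding W_def using D H by (intro openin_INT) auto
  moreover have "a \<in> W" using H D a unfolding W_def by auto
  moreover have "\<forall>w\<in>W. \<forall>y\<in>S. P R w y"
  proof (intro ballI)
    fix w y assume w: "w \<in> W" and y: "y \<in> S"
    then obtain x where x: "x \<in> D" "y \<in> Ofn x" using D by blast
    then have "P (rr x) w y" using H D w unfolding W_def by blast
    moreover have "rr x \<le> R" unfolding R_def using D x by (intro Max_ge) auto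
    ultimately show "P R w y" using mono by blast
  qed
  ultimately show ?thesis by blast
qed

lemma flow_cont: "is_flow \<phi> \<Longrightarrow> continuous_on UNIV \<phi>"
  by (simp add: is_flow_def)

lemma bdry_local:
  fixes \<phi> :: "real \<times> 'a::t2_space \<Rightarrow> 'a"
  assumes lc: "locally_compact_space (euclidean :: 'a topology)"
    and fl: "is_flow \<phi>" and iso: "isolating_nbhd N \<phi>" and x: "x \<in> N - interior N"
  shows "\<exists>Ob W r. open Ob \<and> x \<in> Ob \<and> openin compact_open W \<and> \<phi> \<in> W \<and>
           (\<forall>\<psi>\<in>W. \<forall>y\<in>Ob. \<exists>s. \<bar>s\<bar> \<le> r \<and> \<psi> (s, y) \<notin> N)"
proof -
  have "x \<notin> Inv N \<phi>" using iso x unfolding isolating_nbhd_def by blast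
  then obtain s where s: "\<phi> (s, x) \<notin> N" using x unfolding Inv_def by blast
  have cl: "closed N" using iso unfolding isolating_nbhd_def by (simp add: compact_imp_closed)
  have "\<phi> ` ({s} \<times> {x}) \<subseteq> - N" using s by auto
  from lemma_L[OF lc flow_cont[OF fl] compact_sing _ this] cl
  obtain Ob W where R: "open Ob" "x \<in> Ob" "openin compact_open W" "\<phi> \<in> W" "\<forall>\<psi>\<in>W. \<psi> ` ({s} \<times> Ob) \<subseteq> - N"
    by (auto simp: open_Compl)
  have "\<forall>\<psi>\<in>W. \<forall>y\<in>Ob. \<exists>s'. \<bar>s'\<bar> \<le> \<bar>s\<bar> \<and> \<psi> (s', y) \<notin> N"
  proof (intro ballI)
    fix \<psi> y assume "\<psi> \<in> W" "y \<in> Ob"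
    then have "\<psi> (s, y) \<in> - N" using R(5) by blast
    then show "\<exists>s'. \<bar>s'\<bar> \<le> \<bar>s\<bar> \<and> \<psi> (s', y) \<notin> N" by auto
  qed
  then show ?thesis using R by blast
qed

definition Qp :: "'a::topological_space set \<Rightarrow> 'b::topological_space set \<Rightarrow> real \<Rightarrow> real \<Rightarrow> (real \<times> 'a \<Rightarrow> 'a) \<Rightarrow> ('a \<Rightarrow> 'b)
    \<Rightarrow> (real \<times> 'b \<Rightarrow> 'b) \<Rightarrow> 'a \<Rightarrow> bool" where
  "Qp Na Nb T r \<psi>a g \<psi>b y \<longleftrightarrow>
     (\<exists>t. - r \<le> t \<and> t \<le> 0 \<and> \<psi>a (t, y) \<notin> Na) \<or> (\<exists>t. 0 \<le> t \<and> t \<le> r \<and> \<psi>b (t, g y) \<notin> Nb) \<or>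
     ((\<forall>t. - T \<le> t \<and> t \<le> 0 \<longrightarrow> \<psi>a (t, y) \<in> interior Na) \<and>
      (\<forall>t. 0 \<le> t \<and> t \<le> T \<longrightarrow> \<psi>b (t, g y) \<in> interior Nb))"

lemma Qp_mono: "r \<le> r' \<Longrightarrow> Qp Na Nb T r \<psi>a g \<psi>b y \<Longrightarrow> Qp Na Nb T r' \<psi>a g \<psi>b y"
  unfolding Qp_def
  apply (erule disjE)
   apply (erule exE, rule disjI1, rule_tac x=t in exI, simp)
  apply (erule disjE)
   apply (erule exE, rule disjI2, rule disjI1, rule_tac x=t in exI, simp)
  apply (rule disjI2, rule disjI2, assumption)
  done

lemma top_co: "continuous_on UNIV f \<Longrightarrow> openin compact_open (topspace compact_open) \<and> f \<in> topspace compact_open"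
  by (metis openin_topspace co_topspace mem_Collect_eq)

lemma core_local:
  fixes \<phi>a :: "real \<times> 'a::t2_space \<Rightarrow> 'a" and \<phi>b :: "real \<times> 'b::t2_space \<Rightarrow> 'b" and h :: "'a \<Rightarrow> 'b"
  assumes lca: "locally_compact_space (euclidean :: 'a topology)"
    and lcb: "locally_compact_space (euclidean :: 'b topology)"
    and fla: "is_flow \<phi>a" and flb: "is_flow \<phi>b" and ch: "continuous_on UNIV h"
    and isoa: "isolating_nbhd Na \<phi>a" and isob: "isolating_nbhd Nb \<phi>b"
    and isol: "isolated_map \<phi>a h \<phi>b Na Nb" and p: "p \<in> Na"
  shows "\<exists>Ob Wa Wg Wb r. open Ob \<and> p \<in> Ob \<and> openin compact_open Wa \<and> openin compact_open Wg \<and>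
     openin compact_open Wb \<and> \<phi>a \<in> Wa \<and> h \<in> Wg \<and> \<phi>b \<in> Wb \<and>
     (\<forall>\<psi>a\<in>Wa. \<forall>g\<in>Wg. \<forall>\<psi>b\<in>Wb. \<forall>y\<in>Ob. Qp Na Nb T r \<psi>a g \<psi>b y)"
proof -
  have cla: "closed Na" using isoa unfolding isolating_nbhd_def by (simp add: compact_imp_closed)
  have clb: "closed Nb" using isob unfolding isolating_nbhd_def by (simp add: compact_imp_closed)
  note ca = flow_cont[OF fla] and cb = flow_cont[OF flb]
  show ?thesis
  proof (cases "\<exists>t\<le>0. \<phi>a (t, p) \<notin> Na")
    case True
    then obtain t where t: "t \<le> 0" "\<phi>a (t, p) \<notin> Na" by blast
    have "\<phi>a ` ({t} \<times> {p}) \<subseteq> - Na" using t by auto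
    from lemma_L[OF lca ca compact_sing _ this] cla
    obtain Ob W where R: "open Ob" "p \<in> Ob" "openin compact_open W" "\<phi>a \<in> W" "\<forall>\<psi>\<in>W. \<psi> ` ({t} \<times> Ob) \<subseteq> - Na"
      by (auto simp: open_Compl)
    have "\<forall>\<psi>a\<in>W. \<forall>g\<in>topspace compact_open. \<forall>\<psi>b\<in>topspace compact_open. \<forall>y\<in>Ob. Qp Na Nb T (- t) \<psi>a g \<psi>b y"
    proof (intro ballI)
      fix \<psi>a g \<psi>b y assume "\<psi>a \<in> W" "y \<in> Ob"
      then have "\<psi>a (t, y) \<in> - Na" using R(5) by blast
      then show "Qp Na Nb T (- t) \<psi>a g \<psi>b y" unfolding Qp_def using t by auto
    qed
    then show ?thesis using R top_co[OF ch] top_co[OF cb] by blast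
  next
    case False
    note Fa = False
    show ?thesis
    proof (cases "\<exists>t\<ge>0. \<phi>b (t, h p) \<notin> Nb")
      case True
      then obtain t where t: "t \<ge> 0" "\<phi>b (t, h p) \<notin> Nb" by blast
      have "\<phi>b ` ({t} \<times> {h p}) \<subseteq> - Nb" using t by auto
      from lemma_L[OF lcb cb compact_sing _ this] clb
      obtain Ob1 W where R: "open Ob1" "h p \<in> Ob1" "openin compact_open W" "\<phi>b \<in> W" "\<forall>\<psi>\<in>W. \<psi> ` ({t} \<times> Ob1) \<subseteq> - Nb"
        by (auto simp: open_Compl)
      obtain Ob Wg where G: "open Ob" "p \<in> Ob" "openin compact_open Wg" "h \<in> Wg" "\<forall>g\<in>Wg. g ` Ob \<subseteq> Ob1"
        using lemma_G[OF lca ch R(1) R(2)] by blast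
      have "\<forall>\<psi>a\<in>topspace compact_open. \<forall>g\<in>Wg. \<forall>\<psi>b\<in>W. \<forall>y\<in>Ob. Qp Na Nb T t \<psi>a g \<psi>b y"
      proof (intro ballI)
        fix \<psi>a g \<psi>b y assume "g \<in> Wg" "\<psi>b \<in> W" "y \<in> Ob"
        then have "g y \<in> Ob1" using G(5) by blast
        then have "\<psi>b (t, g y) \<in> - Nb" using R(5) \<open>\<psi>b \<in> W\<close> by blast
        then show "Qp Na Nb T t \<psi>a g \<psi>b y" unfolding Qp_def using t by auto
      qed
      then show ?thesis using R G top_co[OF ca] by blast
    next
      case False
      have "p \<in> S_set \<phi>a h \<phi>b Na Nb"
        unfolding S_set_def bwd_orbit_def fwd_orbit_def using p Fa False by auto
      then have orb: "bwd_orbit \<phi>a p \<subseteq> interior Na" "fwd_orbit \<phi>b (h p) \<subseteq> interior Nb"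
        using isol unfolding isolated_map_def by blast+
      have "\<phi>a ` ({- T..0} \<times> {p}) \<subseteq> interior Na"
      proof (rule subsetI)
        fix z assume "z \<in> \<phi>a ` ({- T..0} \<times> {p})"
        then obtain t where "t \<le> 0" "z = \<phi>a (t, p)" by auto
        then have "z \<in> bwd_orbit \<phi>a p" unfolding bwd_orbit_def by blast
        then show "z \<in> interior Na" using orb(1) by blast
      qed
      from lemma_L[OF lca ca compact_Icc open_interior this]
      obtain Ob1 Wa where A: "open Ob1" "p \<in> Ob1" "openin compact_open Wa" "\<phi>a \<in> Wa"
          "\<forall>\<psi>\<in>Wa. \<psi> ` ({- T..0} \<times> Ob1) \<subseteq> interior Na" by blast
      have "\<phi>b ` ({0..T} \<times> {h p}) \<subseteq> interior Nb"
      proof (rule subsetI)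
        fix z assume "z \<in> \<phi>b ` ({0..T} \<times> {h p})"
        then obtain t where "t \<ge> 0" "z = \<phi>b (t, h p)" by auto
        then have "z \<in> fwd_orbit \<phi>b (h p)" unfolding fwd_orbit_def by blast
        then show "z \<in> interior Nb" using orb(2) by blast
      qed
      from lemma_L[OF lcb cb compact_Icc open_interior this]
      obtain Ob2 Wb where B: "open Ob2" "h p \<in> Ob2" "openin compact_open Wb" "\<phi>b \<in> Wb"
          "\<forall>\<psi>\<in>Wb. \<psi> ` ({0..T} \<times> Ob2) \<subseteq> interior Nb" by blast
      obtain Ob3 Wg where G: "open Ob3" "p \<in> Ob3" "openin compact_open Wg" "h \<in> Wg" "\<forall>g\<in>Wg. g ` Ob3 \<subseteq> Ob2"
        using lemma_G[OF lca ch B(1) B(2)] by blast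
      have "\<forall>\<psi>a\<in>Wa. \<forall>g\<in>Wg. \<forall>\<psi>b\<in>Wb. \<forall>y\<in>Ob1 \<inter> Ob3. Qp Na Nb T 0 \<psi>a g \<psi>b y"
      proof (intro ballI)
        fix \<psi>a g \<psi>b y assume H: "\<psi>a \<in> Wa" "g \<in> Wg" "\<psi>b \<in> Wb" "y \<in> Ob1 \<inter> Ob3"
        have 1: "\<forall>t. - T \<le> t \<and> t \<le> 0 \<longrightarrow> \<psi>a (t, y) \<in> interior Na"
        proof (intro allI impI)
          fix t assume "- T \<le> t \<and> t \<le> 0"
          then have "(t, y) \<in> {- T..0} \<times> Ob1" using H by auto
          then show "\<psi>a (t, y) \<in> interior Na" using A(5) H(1) by blast
        qed
        have gy: "g y \<in> Ob2" using G(5) H by blast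
        have 2: "\<forall>t. 0 \<le> t \<and> t \<le> T \<longrightarrow> \<psi>b (t, g y) \<in> interior Nb"
        proof (intro allI impI)
          fix t assume "0 \<le> t \<and> t \<le> T"
          then have "(t, g y) \<in> {0..T} \<times> Ob2" using gy by auto
          then show "\<psi>b (t, g y) \<in> interior Nb" using B(5) H(3) by blast
        qed
        show "Qp Na Nb T 0 \<psi>a g \<psi>b y" unfolding Qp_def using 1 2 by blast
      qed
      moreover have "open (Ob1 \<inter> Ob3)" "p \<in> Ob1 \<inter> Ob3" using A G by auto
      ultimately show ?thesis using A B G by blast
    qed
  qed
qed

lemma lift3:
  "openin compact_open W1 \<Longrightarrow> openin compact_open W2 \<Longrightarrow> openin compact_open W3 \<Longrightarrow>
   openin (prod_topology compact_open (prod_topology compact_open compact_open)) (W1 \<times> (W2 \<times> W3))"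
  by (simp add: openin_prod_Times_iff)

lemma bdry_compact: "compact N \<Longrightarrow> compact (N - interior N)"
proof -
  assume "compact N"
  moreover have "closed (- interior N)" by (rule closed_Compl) (rule open_interior)
  ultimately have "compact (N \<inter> - interior N)" by (rule compact_Int_closed)
  then show ?thesis by (simp add: Diff_eq)
qed

theorem proposition5p2:
  fixes \<phi>a :: "real \<times> 'a::t2_space \<Rightarrow> 'a"
    and \<phi>b :: "real \<times> 'b::t2_space \<Rightarrow> 'b"
    and h :: "'a \<Rightarrow> 'b"
    and Na :: "'a set" and Nb :: "'b set"
  assumes "locally_compact_space (euclidean :: 'a topology)"
    and "locally_compact_space (euclidean :: 'b topology)"
    and "is_flow \<phi>a" and "is_flow \<phi>b"
    and "continuous_on UNIV h"
    and "isolating_nbhd Na \<phi>a" and "isolating_nbhd Nb \<phi>b"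
    and "isolated_map \<phi>a h \<phi>b Na Nb"
  shows "\<exists>A. openin (C_topology Na Nb) A \<and> (\<phi>a, h, \<phi>b) \<in> A \<and>
           (\<forall>\<psi>a g \<psi>b. (\<psi>a, g, \<psi>b) \<in> A \<longrightarrow> isolated_map \<psi>a g \<psi>b Na Nb)"
proof -
  note lca = assms(1) and lcb = assms(2) and fla = assms(3) and flb = assms(4) and ch = assms(5)
    and isoa = assms(6) and isob = assms(7) and isol = assms(8)
  define X where "X = prod_topology (compact_open :: ((real \<times> 'a \<Rightarrow> 'a)) topology)
     (prod_topology (compact_open :: ('a \<Rightarrow> 'b) topology) (compact_open :: ((real \<times> 'b \<Rightarrow> 'b)) topology))"
  note ca = flow_cont[OF fla] and cb = flow_cont[OF flb]
  have aX: "(\<phi>a, h, \<phi>b) \<in> topspace X"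
    unfolding X_def topspace_prod_topology co_topspace using ca cb ch by simp
  have cNa: "compact Na" and cNb: "compact Nb"
    using isoa isob unfolding isolating_nbhd_def by auto
  have "\<exists>W R. openin X W \<and> (\<phi>a, h, \<phi>b) \<in> W \<and>
      (\<forall>w\<in>W. \<forall>y\<in>Na - interior Na. \<exists>s. \<bar>s\<bar> \<le> R \<and> fst w (s, y) \<notin> Na)"
  proof (rule cover_lemma[OF bdry_compact[OF cNa] aX, where P="(\<lambda>r w y. \<exists>s. \<bar>s\<bar> \<le> r \<and> fst w (s, y) \<notin> Na)"])
    fix x assume x: "x \<in> Na - interior Na"
    obtain Ob W r where R: "open Ob" "x \<in> Ob" "openin compact_open W" "\<phi>a \<in> W"
       "\<forall>\<psi>\<in>W. \<forall>y\<in>Ob. \<exists>s. \<bar>s\<bar> \<le> r \<and> \<psi> (s, y) \<notin> Na"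
      using bdry_local[OF lca fla isoa x] by (elim exE conjE)
    have "openin X (W \<times> (topspace compact_open \<times> topspace compact_open))"
      unfolding X_def by (intro lift3 R(3) openin_topspace)
    moreover have "(\<phi>a, h, \<phi>b) \<in> W \<times> (topspace compact_open \<times> topspace compact_open)"
      using R(4) ch cb by (simp add: co_topspace)
    moreover have "\<forall>w\<in>W \<times> (topspace compact_open \<times> topspace compact_open). \<forall>y\<in>Ob.
        (\<lambda>r w y. \<exists>s. \<bar>s\<bar> \<le> r \<and> fst w (s, y) \<notin> Na) r w y"
      using R(5) by auto
    ultimately show "\<exists>Ob W r. open Ob \<and> x \<in> Ob \<and> openin X W \<and> (\<phi>a, h, \<phi>b) \<in> W \<and>
        (\<forall>w\<in>W. \<forall>y\<in>Ob. (\<lambda>r w y. \<exists>s. \<bar>s\<bar> \<le> r \<and> fst w (s, y) \<notin> Na) r w y)"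
      using R(1,2) by blast
  next
    fix r r' :: real and w :: "(real \<times> 'a \<Rightarrow> 'a) \<times> ('a \<Rightarrow> 'b) \<times> (real \<times> 'b \<Rightarrow> 'b)" and y
    assume "r \<le> r'" "(\<lambda>r w y. \<exists>s. \<bar>s\<bar> \<le> r \<and> fst w (s, y) \<notin> Na) r w y"
    then show "(\<lambda>r w y. \<exists>s. \<bar>s\<bar> \<le> r \<and> fst w (s, y) \<notin> Na) r' w y" by force
  qed
  then obtain W1 R1 where W1: "openin X W1" "(\<phi>a, h, \<phi>b) \<in> W1"
      "\<forall>w\<in>W1. \<forall>y\<in>Na - interior Na. \<exists>s. \<bar>s\<bar> \<le> R1 \<and> fst w (s, y) \<notin> Na"
    by (elim exE conjE)
  have "\<exists>W R. openin X W \<and> (\<phi>a, h, \<phi>b) \<in> W \<and>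
      (\<forall>w\<in>W. \<forall>y\<in>Nb - interior Nb. \<exists>s. \<bar>s\<bar> \<le> R \<and> snd (snd w) (s, y) \<notin> Nb)"
  proof (rule cover_lemma[OF bdry_compact[OF cNb] aX, where P="(\<lambda>r w y. \<exists>s. \<bar>s\<bar> \<le> r \<and> snd (snd w) (s, y) \<notin> Nb)"])
    fix x assume x: "x \<in> Nb - interior Nb"
    obtain Ob W r where R: "open Ob" "x \<in> Ob" "openin compact_open W" "\<phi>b \<in> W"
       "\<forall>\<psi>\<in>W. \<forall>y\<in>Ob. \<exists>s. \<bar>s\<bar> \<le> r \<and> \<psi> (s, y) \<notin> Nb"
      using bdry_local[OF lcb flb isob x] by (elim exE conjE)
    have "openin X (topspace compact_open \<times> (topspace compact_open \<times> W))"
      unfolding X_def by (intro lift3 R(3) openin_topspace)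
    moreover have "(\<phi>a, h, \<phi>b) \<in> topspace compact_open \<times> (topspace compact_open \<times> W)"
      using R(4) ch ca by (simp add: co_topspace)
    moreover have "\<forall>w\<in>topspace compact_open \<times> (topspace compact_open \<times> W). \<forall>y\<in>Ob.
        (\<lambda>r w y. \<exists>s. \<bar>s\<bar> \<le> r \<and> snd (snd w) (s, y) \<notin> Nb) r w y"
      using R(5) by auto
    ultimately show "\<exists>Ob W r. open Ob \<and> x \<in> Ob \<and> openin X W \<and> (\<phi>a, h, \<phi>b) \<in> W \<and>
        (\<forall>w\<in>W. \<forall>y\<in>Ob. (\<lambda>r w y. \<exists>s. \<bar>s\<bar> \<le> r \<and> snd (snd w) (s, y) \<notin> Nb) r w y)"
      using R(1,2) by blast
  next
    fix r r' :: real and w :: "(real \<times> 'a \<Rightarrow> 'a) \<times> ('a \<Rightarrow> 'b) \<times> (real \<times> 'b \<Rightarrow> 'b)" and y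
    assume "r \<le> r'" "(\<lambda>r w y. \<exists>s. \<bar>s\<bar> \<le> r \<and> snd (snd w) (s, y) \<notin> Nb) r w y"
    then show "(\<lambda>r w y. \<exists>s. \<bar>s\<bar> \<le> r \<and> snd (snd w) (s, y) \<notin> Nb) r' w y" by force
  qed
  then obtain W2 R2 where W2: "openin X W2" "(\<phi>a, h, \<phi>b) \<in> W2"
      "\<forall>w\<in>W2. \<forall>y\<in>Nb - interior Nb. \<exists>s. \<bar>s\<bar> \<le> R2 \<and> snd (snd w) (s, y) \<notin> Nb"
    by (elim exE conjE)
  define T where "T = max R1 R2"
  have "\<exists>W R. openin X W \<and> (\<phi>a, h, \<phi>b) \<in> W \<and>
      (\<forall>w\<in>W. \<forall>y\<in>Na. Qp Na Nb T R (fst w) (fst (snd w)) (snd (snd w)) y)"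
  proof (rule cover_lemma[OF cNa aX, where P="(\<lambda>r w y. Qp Na Nb T r (fst w) (fst (snd w)) (snd (snd w)) y)"])
    fix x assume x: "x \<in> Na"
    obtain Ob Wa Wg Wb r where R: "open Ob" "x \<in> Ob" "openin compact_open Wa" "openin compact_open Wg"
      "openin compact_open Wb" "\<phi>a \<in> Wa" "h \<in> Wg" "\<phi>b \<in> Wb"
      "\<forall>\<psi>a\<in>Wa. \<forall>g\<in>Wg. \<forall>\<psi>b\<in>Wb. \<forall>y\<in>Ob. Qp Na Nb T r \<psi>a g \<psi>b y"
      using core_local[OF lca lcb fla flb ch isoa isob isol x, of T] by (elim exE conjE)
    have "openin X (Wa \<times> (Wg \<times> Wb))"
      unfolding X_def by (intro lift3 R(3,4,5))
    moreover have "(\<phi>a, h, \<phi>b) \<in> Wa \<times> (Wg \<times> Wb)"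
      using R(6,7,8) by simp
    moreover have "\<forall>w\<in>Wa \<times> (Wg \<times> Wb). \<forall>y\<in>Ob.
        (\<lambda>r w y. Qp Na Nb T r (fst w) (fst (snd w)) (snd (snd w)) y) r w y"
      using R(9) by auto
    ultimately show "\<exists>Ob W r. open Ob \<and> x \<in> Ob \<and> openin X W \<and> (\<phi>a, h, \<phi>b) \<in> W \<and>
        (\<forall>w\<in>W. \<forall>y\<in>Ob. (\<lambda>r w y. Qp Na Nb T r (fst w) (fst (snd w)) (snd (snd w)) y) r w y)"
      using R(1,2) by blast
  next
    fix r r' :: real and w :: "(real \<times> 'a \<Rightarrow> 'a) \<times> ('a \<Rightarrow> 'b) \<times> (real \<times> 'b \<Rightarrow> 'b)" and y
    assume "r \<le> r'" "(\<lambda>r w y. Qp Na Nb T r (fst w) (fst (snd w)) (snd (snd w)) y) r w y"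
    then show "(\<lambda>r w y. Qp Na Nb T r (fst w) (fst (snd w)) (snd (snd w)) y) r' w y"
      by (rule Qp_mono)
  qed
  then obtain W3 R3 where W3: "openin X W3" "(\<phi>a, h, \<phi>b) \<in> W3"
      "\<forall>w\<in>W3. \<forall>y\<in>Na. Qp Na Nb T R3 (fst w) (fst (snd w)) (snd (snd w)) y"
    by (elim exE conjE)
  define A where "A = (W1 \<inter> W2 \<inter> W3) \<inter> C_space Na Nb"
  have "openin (C_topology Na Nb) A"
    unfolding C_topology_def A_def openin_subtopology
    by (intro exI[of _ "W1 \<inter> W2 \<inter> W3"]) (use W1 W2 W3 in \<open>simp add: X_def openin_Int\<close>)
  moreover have "(\<phi>a, h, \<phi>b) \<in> A"
    unfolding A_def C_space_def using W1 W2 W3 fla flb ch isoa isob by simp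
  moreover have "isolated_map \<psi>a g \<psi>b Na Nb" if inA: "(\<psi>a, g, \<psi>b) \<in> A" for \<psi>a g \<psi>b
    unfolding isolated_map_def
  proof (intro ballI conjI)
    fix p assume pS: "p \<in> S_set \<psi>a g \<psi>b Na Nb"
    have pNa: "p \<in> Na" and bw: "bwd_orbit \<psi>a p \<subseteq> Na" and fw: "fwd_orbit \<psi>b (g p) \<subseteq> Nb"
      using pS unfolding S_set_def by auto
    have fa: "is_flow \<psi>a" and fb: "is_flow \<psi>b"
      using inA unfolding A_def C_space_def by auto
    have Q3: "Qp Na Nb T R3 \<psi>a g \<psi>b p" 
    proof -
      have "(\<psi>a, g, \<psi>b) \<in> W3" using inA unfolding A_def by simp
      from bspec[OF bspec[OF W3(3) this] pNa] show ?thesis by simp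
    qed
    have bwN: "\<psi>a (t, p) \<in> Na" if "t \<le> 0" for t
      using bw that unfolding bwd_orbit_def by blast
    have fwN: "\<psi>b (t, g p) \<in> Nb" if "t \<ge> 0" for t
      using fw that unfolding fwd_orbit_def by blast
    have good: "(\<forall>t. - T \<le> t \<and> t \<le> 0 \<longrightarrow> \<psi>a (t, p) \<in> interior Na) \<and>
      (\<forall>t. 0 \<le> t \<and> t \<le> T \<longrightarrow> \<psi>b (t, g p) \<in> interior Nb)"
    proof -
      have n1: "\<not> (\<exists>t. - R3 \<le> t \<and> t \<le> 0 \<and> \<psi>a (t, p) \<notin> Na)" using bwN by auto
      have n2: "\<not> (\<exists>t. 0 \<le> t \<and> t \<le> R3 \<and> \<psi>b (t, g p) \<notin> Nb)" using fwN by auto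
      show ?thesis using Q3 n1 n2 unfolding Qp_def by blast
    qed
    show "bwd_orbit \<psi>a p \<subseteq> interior Na"
    proof (rule subsetI)
      fix z assume "z \<in> bwd_orbit \<psi>a p"
      then obtain t0 where t0: "t0 \<le> 0" "z = \<psi>a (t0, p)" unfolding bwd_orbit_def by blast
      show "z \<in> interior Na"
      proof (rule ccontr)
        assume nz: "z \<notin> interior Na"
        show False
        proof (cases "t0 < - T")
          case True
          have "z \<in> Na - interior Na" using nz bwN t0 by simp
          moreover have "(\<psi>a, g, \<psi>b) \<in> W1" using inA unfolding A_def by simp
          ultimately obtain s where s: "\<bar>s\<bar> \<le> R1" "\<psi>a (s, z) \<notin> Na" using W1(3) by fastforce
          have "\<psi>a (s, z) = \<psi>a (s + t0, p)" using fa t0(2) unfolding is_flow_def by simp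
          moreover have "s + t0 \<le> 0" using s(1) True unfolding T_def by linarith
          ultimately show False using bwN s(2) by simp
        next
          case False
          then show False using good t0 nz by auto
        qed
      qed
    qed
    show "fwd_orbit \<psi>b (g p) \<subseteq> interior Nb"
    proof (rule subsetI)
      fix z assume "z \<in> fwd_orbit \<psi>b (g p)"
      then obtain t0 where t0: "t0 \<ge> 0" "z = \<psi>b (t0, g p)" unfolding fwd_orbit_def by blast
      show "z \<in> interior Nb"
      proof (rule ccontr)
        assume nz: "z \<notin> interior Nb"
        show False
        proof (cases "t0 > T")
          case True
          have "z \<in> Nb - interior Nb" using nz fwN t0 by simp
          moreover have "(\<psi>a, g, \<psi>b) \<in> W2" using inA unfolding A_def by simp
          ultimately obtain s where s: "\<bar>s\<bar> \<le> R2" "\<psi>b (s, z) \<notin> Nb" using W2(3) by fastforce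
          have "\<psi>b (s, z) = \<psi>b (s + t0, g p)" using fb t0(2) unfolding is_flow_def by simp
          moreover have "s + t0 \<ge> 0" using s(1) True unfolding T_def by linarith
          ultimately show False using fwN s(2) by simp
        next
          case False
          then show False using good t0 nz by auto
        qed
      qed
    qed
  qed
  ultimately show ?thesis by blast
qed

end
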